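(* Let $0<p\le q\le1$, let $(\mathcal M,d,0)$ be a finite pointed $q$-metric space, $0\in\mathcal N\subset\mathcal M$, $a\in\mathbb R^{\mathcal N\setminus\{0\}}$ and $T\in\mathcal T(\mathcal M)$. Then $T_{d_T}(a)=T_d(a)$ and \[\Big\|\sum_{x\in\mathcal N\setminus\{0\}}a_x\delta(x)\Big\|_{\mathcal F_p(\mathcal N_T)}\ge\Big\|\sum_{x\in\mathcal N\setminus\{0\}}a_x\delta(x)\Big\|_{\mathcal F_p(\mathcal N)}.\] In particular, if $a\in\mathbb R^{\mathcal N\setminus\{0\}}$ and $T\in\mathcal T(\mathcal M)$ satisfy $T_d(a)=1=\|\sum_{x\in\mathcal N\setminus\{0\}}a_x\delta(x)\|_{\mathcal F_p(\mathcal M)}$ and $\mathrm{amen}_p(\mathcal N,\mathcal M)=\|\sum_{x\in\mathcal N\setminus\{0\}}a_x\delta(x)\|_{\mathcal F_p(\mathcal N)}$, then \[\mathrm{amen}_p(\mathcal N,\mathcal M)\le\frac{\|\sum_{x\in\mathcal N\setminus\{0\}}a_x\delta(x)\|_{\mathcal F_p(\mathcal N_T)}}{T_{d_T}(a)}\le\mathrm{amen}_p(\mathcal N_T,\mathcal M_T).\]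
   Context: For $r\in(0,1]$, an $r$-metric space is a set with $d$ such that $d^r$ is a metric (a $q$-metric space is also a $p$-metric space for $p\le q$); pointed means a distinguished point $0$. A $p$-Banach space is a complete vector space with a $p$-norm. $\delta(x)$ is evaluation at $x$ on real functions vanishing at $0$, and $\mathcal F_p$ of a pointed $p$-metric space is the completion of $\mathrm{span}\{\delta(x)\}$ under $\|\sum a_i\delta(x_i)\|=\sup\|\sum a_if(x_i)\|_Y$ over $p$-Banach $Y$ and $1$-Lipschitz $f$ into $Y$ vanishing at $0$. For $0\in\mathcal N\subset\mathcal M$, $L_j$ is the linear map $\delta_{\mathcal N}(x)\mapsto\delta_{\mathcal M}(x)$ and $\mathrm{amen}_p(\mathcal N,\mathcal M)=\|L_j^{-1}\|$ if $L_j$ is an isomorphism onto its range ($+\infty$ otherwise). $\mathcal T(\mathcal M)$ is the set of trees on $\mathcal M$ rooted at $0$; for $x\ne0$, $\mathrm{pred}_T(x)$ is the neighbour of $x$ on the path to $0$, $e_x^T=\{\mathrm{pred}_T(x),x\}$, $V_x^T$ the vertex set of the subtree rooted at $x$. For a metric $\rho$ on $\mathcal M$ and $a$ extended by $0$ to $\mathcal M$, $T_\rho(a)=\big(\sum_{x\in\mathcal M\setminus\{0\}}|(\sum_{y\in V_x^T}a_y)\rho(e_x^T)|^p\big)^{1/p}$. $d_T$ is the $q$-metric on $\mathcal M$ given by $d_T(u,v)=(\sum_{i}d(u_i,u_{i+1})^q)^{1/q}$, where $u=u_1,\dots,u_m=v$ is the path from $u$ to $v$ in $T$; $\mathcal M_T=(\mathcal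 M,d_T,0)$ and $\mathcal N_T=(\mathcal N,d_T,0)$. *)

theory Defs
  imports "HOL-Analysis.Analysis"
begin

definition rmetric_on :: "real \<Rightarrow> 'a set \<Rightarrow> ('a \<Rightarrow> 'a \<Rightarrow> real) \<Rightarrow> bool" where
  "rmetric_on r M d \<longleftrightarrow>
     (\<forall>x\<in>M. \<forall>y\<in>M. 0 \<le> d x y \<and> (d x y = 0 \<longleftrightarrow> x = y) \<and> d x y = d y x) \<and>
     (\<forall>x\<in>M. \<forall>y\<in>M. \<forall>z\<in>M. d x z powr r \<le> d x y powr r + d y z powr r)"

definition pseminorm :: "real \<Rightarrow> (('i \<Rightarrow> real) \<Rightarrow> real) \<Rightarrow> bool" where
  "pseminorm p N \<longleftrightarrow>
     (\<forall>x. 0 \<le> N x) \<and> (\<forall>c x. N (\<lambda>t. c * x t) = \<bar>c\<bar> * N x) \<and>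
     (\<forall>x y. N (\<lambda>t. x t + y t) powr p \<le> N x powr p + N y powr p)"

text \<open>Norm of \<Sum>_{x\<in>A} a_x \<delta>(x) in F_p(S,d,b): supremum of \<parallel>\<Sum> a_x f(x)\<parallel>_Y over
  p-(semi)normed targets Y (realised on the universal space 'a \<Rightarrow> real) and
  1-Lipschitz f : S \<rightarrow> Y with f b = 0.\<close>
definition Fnorm :: "real \<Rightarrow> ('a \<Rightarrow> 'a \<Rightarrow> real) \<Rightarrow> 'a \<Rightarrow> 'a set \<Rightarrow> 'a set \<Rightarrow> ('a \<Rightarrow> real) \<Rightarrow> real" where
  "Fnorm p d b S A a = Sup {N (\<lambda>t. \<Sum>x\<in>A. a x * f x t) | N f.
      pseminorm p (N :: ('a \<Rightarrow> real) \<Rightarrow> real) \<and> (\<forall>t. f b t = 0) \<and>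
      (\<forall>x\<in>S. \<forall>y\<in>S. N (\<lambda>t. f x t - f y t) \<le> d x y)}"

text \<open>amen_p(N,M) = \<parallel>L_j^{-1}\<parallel> (= \<infinity> if L_j is not an isomorphism onto its range).\<close>
definition amen :: "real \<Rightarrow> ('a \<Rightarrow> 'a \<Rightarrow> real) \<Rightarrow> 'a \<Rightarrow> 'a set \<Rightarrow> 'a set \<Rightarrow> ereal" where
  "amen p d b N M = Sup {ereal (Fnorm p d b N (N - {b}) a) | a. Fnorm p d b M (N - {b}) a \<le> 1}"

text \<open>Trees on M rooted at b, represented by their predecessor map par (par b = b).\<close>
definition is_rooted_tree :: "'a set \<Rightarrow> 'a \<Rightarrow> ('a \<Rightarrow> 'a) \<Rightarrow> bool" where
  "is_rooted_tree M b par \<longleftrightarrow> par b = b \<and> (\<forall>x\<in>M. par x \<in> M) \<and> (\<forall>x\<in>M. \<exists>n. (par ^^ n) x = b)"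

definition subtree :: "'a set \<Rightarrow> ('a \<Rightarrow> 'a) \<Rightarrow> 'a \<Rightarrow> 'a set" where
  "subtree M par x = {y\<in>M. \<exists>n. (par ^^ n) y = x}"

definition Ttree :: "real \<Rightarrow> 'a set \<Rightarrow> 'a \<Rightarrow> ('a \<Rightarrow> 'a) \<Rightarrow> ('a \<Rightarrow> 'a \<Rightarrow> real) \<Rightarrow> ('a \<Rightarrow> real) \<Rightarrow> real" where
  "Ttree p M b par \<rho> a =
     (\<Sum>x\<in>M - {b}. \<bar>(\<Sum>y\<in>subtree M par x. a y) * \<rho> (par x) x\<bar> powr p) powr (1 / p)"

text \<open>Edges (indexed by their child endpoint) on the path from u to the root.\<close>
definition root_edges :: "'a set \<Rightarrow> 'a \<Rightarrow> ('a \<Rightarrow> 'a) \<Rightarrow> 'a \<Rightarrow> 'a set" where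
  "root_edges M b par u = {x\<in>M - {b}. u \<in> subtree M par x}"

text \<open>d_T: the edges of the tree path from u to v are the symmetric difference of the
  root paths of u and v.\<close>
definition dT :: "real \<Rightarrow> 'a set \<Rightarrow> 'a \<Rightarrow> ('a \<Rightarrow> 'a) \<Rightarrow> ('a \<Rightarrow> 'a \<Rightarrow> real) \<Rightarrow> 'a \<Rightarrow> 'a \<Rightarrow> real" where
  "dT q M b par d u v =
     (\<Sum>x\<in>(root_edges M b par u - root_edges M b par v) \<union> (root_edges M b par v - root_edges M b par u).
        d (par x) x powr q) powr (1 / q)"

end

theory Submission
  imports Defs
begin

lemma funpow_b: "is_rooted_tree M b par \<Longrightarrow> (par ^^ n) b = b"
  by (induction n) (auto simp: is_rooted_tree_def)

lemma funpow_M: "is_rooted_tree M b par \<Longrightarrow> x \<in> M \<Longrightarrow> (par ^^ n) x \<in> M"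
  by (induction n) (auto simp: is_rooted_tree_def)

lemma nocycle:
  assumes T: "is_rooted_tree M b par" and x: "x \<in> M" and m: "0 < m" and c: "(par ^^ m) x = x"
  shows "x = b"
proof -
  obtain n where n: "(par ^^ n) x = b" using T x by (auto simp: is_rooted_tree_def)
  have k: "(par ^^ (k * m)) x = x" for k
  proof (induction k)
    case (Suc k)
    have "(par ^^ (Suc k * m)) x = (par ^^ m) ((par ^^ (k * m)) x)"
      by (simp add: funpow_add)
    then show ?case using Suc c by simp
  qed simp
  have "n \<le> n * m" using m by simp
  then have e: "n * m = (n * m - n) + n" by simp
  have "(par ^^ (n * m)) x = (par ^^ (n * m - n)) ((par ^^ n) x)"
    by (subst e) (simp add: funpow_add)
  then show ?thesis using k[of n] n funpow_b[OF T] by simp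
qed

lemma R_b: "is_rooted_tree M b par \<Longrightarrow> root_edges M b par b = {}"
  by (auto simp: root_edges_def subtree_def funpow_b)

lemma R_sub: "root_edges M b par u \<subseteq> M - {b}"
  by (auto simp: root_edges_def)

lemma R_fin: "finite M \<Longrightarrow> finite (root_edges M b par u)"
  using R_sub by (metis finite_Diff finite_subset)

lemma R_step:
  assumes T: "is_rooted_tree M b par" and u: "u \<in> M" "u \<noteq> b"
  shows "root_edges M b par u = insert u (root_edges M b par (par u))"
    and "u \<notin> root_edges M b par (par u)"
proof -
  have pu: "par u \<in> M" using T u by (auto simp: is_rooted_tree_def)
  have ex: "(\<exists>n. (par ^^ n) u = y) \<longleftrightarrow> y = u \<or> (\<exists>n. (par ^^ n) (par u) = y)" for y
  proof
    assume "\<exists>n. (par ^^ n) u = y"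
    then obtain n where "(par ^^ n) u = y" by blast
    then show "y = u \<or> (\<exists>n. (par ^^ n) (par u) = y)"
      by (cases n) (auto simp: funpow_Suc_right simp del: funpow.simps)
  next
    assume "y = u \<or> (\<exists>n. (par ^^ n) (par u) = y)"
    then show "\<exists>n. (par ^^ n) u = y"
    proof
      assume "y = u" then show ?thesis by (metis funpow_0)
    next
      assume "\<exists>n. (par ^^ n) (par u) = y"
      then obtain n where "(par ^^ n) (par u) = y" by blast
      then have "(par ^^ Suc n) u = y" by (simp add: funpow_Suc_right del: funpow.simps)
      then show ?thesis by blast
    qed
  qed
  show "root_edges M b par u = insert u (root_edges M b par (par u))"
    using u pu ex by (auto simp: root_edges_def subtree_def)
  show "u \<notin> root_edges M b par (par u)"
  proof
    assume "u \<in> root_edges M b par (par u)"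
    then obtain n where "(par ^^ n) (par u) = u" by (auto simp: root_edges_def subtree_def)
    then have "(par ^^ Suc n) u = u" by (simp add: funpow_Suc_right del: funpow.simps)
    then show False using nocycle[OF T u(1)] u(2) by blast
  qed
qed

lemma R_anti:
  assumes T: "is_rooted_tree M b par" and "u \<in> root_edges M b par v" "v \<in> root_edges M b par u"
  shows "u = v"
proof (rule ccontr)
  assume ne: "u \<noteq> v"
  obtain i where i: "(par ^^ i) v = u" and vM: "v \<in> M" and vb: "v \<noteq> b"
    using assms(2,3) by (auto simp: root_edges_def subtree_def)
  obtain j where j: "(par ^^ j) u = v" using assms(3) by (auto simp: root_edges_def subtree_def)
  have "(par ^^ (j + i)) v = v" using i j by (simp add: funpow_add)
  moreover have "j + i > 0" using i ne by (cases i) auto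
  ultimately show False using nocycle[OF T vM, of "j + i"] vb by simp
qed

lemma card_step:
  assumes T: "is_rooted_tree M b par" "finite M" and u: "u \<in> M" "u \<noteq> b"
  shows "card (root_edges M b par (par u)) < card (root_edges M b par u)"
  using R_step[OF T(1) u] R_fin[OF T(2)] by simp


definition Dsum :: "real \<Rightarrow> 'a set \<Rightarrow> 'a \<Rightarrow> ('a \<Rightarrow> 'a) \<Rightarrow> ('a \<Rightarrow> 'a \<Rightarrow> real) \<Rightarrow> 'a \<Rightarrow> 'a \<Rightarrow> real" where
  "Dsum q M b par d u v =
     (\<Sum>x\<in>(root_edges M b par u - root_edges M b par v) \<union> (root_edges M b par v - root_edges M b par u).
        d (par x) x powr q)"

lemma dT_Dsum: "dT q M b par d u v = Dsum q M b par d u v powr (1 / q)"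
  by (simp add: dT_def Dsum_def)

lemma Dsum_sym: "Dsum q M b par d u v = Dsum q M b par d v u"
  by (simp add: Dsum_def Un_commute)

lemma dT_sym: "dT q M b par d u v = dT q M b par d v u"
  by (simp add: dT_def Un_commute)

lemma Dsum_nonneg: "0 \<le> Dsum q M b par d u v"
  unfolding Dsum_def by (rule sum_nonneg) simp

lemma peel:
  assumes T: "is_rooted_tree M b par" and fin: "finite M" and rm: "rmetric_on q M d"
    and u: "u \<in> M" "u \<noteq> b" and v: "v \<in> M" and uv: "u \<notin> root_edges M b par v"
    and IH: "d (par u) v powr q \<le> Dsum q M b par d (par u) v"
  shows "d u v powr q \<le> Dsum q M b par d u v"
proof -
  let ?R = "root_edges M b par"
  have pu: "par u \<in> M" using T u by (auto simp: is_rooted_tree_def)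
  have s1: "?R u = insert u (?R (par u))" and s2: "u \<notin> ?R (par u)" using R_step[OF T u] by auto
  have D: "(?R u - ?R v) \<union> (?R v - ?R u) = insert u ((?R (par u) - ?R v) \<union> (?R v - ?R (par u)))"
    using s1 uv by auto
  have nin: "u \<notin> (?R (par u) - ?R v) \<union> (?R v - ?R (par u))" using s2 uv by auto
  have fD: "finite ((?R (par u) - ?R v) \<union> (?R v - ?R (par u)))" using R_fin[OF fin] by auto
  have eq: "Dsum q M b par d u v = d (par u) u powr q + Dsum q M b par d (par u) v"
    unfolding Dsum_def D using sum.insert[OF fD nin] by simp
  have tri: "d u v powr q \<le> d u (par u) powr q + d (par u) v powr q"
    using rm u v pu unfolding rmetric_on_def by blast
  have sy: "d u (par u) = d (par u) u" using rm u pu unfolding rmetric_on_def by blast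
  have tri': "d u v powr q \<le> d (par u) u powr q + d (par u) v powr q" using tri sy by simp
  show ?thesis using eq tri' IH by linarith
qed

lemma dist_le_Dsum:
  assumes T: "is_rooted_tree M b par" and fin: "finite M" and rm: "rmetric_on q M d"
  shows "u \<in> M \<Longrightarrow> v \<in> M \<Longrightarrow> d u v powr q \<le> Dsum q M b par d u v"
proof (induction "card (root_edges M b par u) + card (root_edges M b par v)" arbitrary: u v rule: less_induct)
  case less
  let ?R = "root_edges M b par"
  show ?case
  proof (cases "u = v")
    case True
    then have "d u v = 0" using rm less.prems unfolding rmetric_on_def by blast
    then show ?thesis using Dsum_nonneg by simp
  next
    case ne: False
    show ?thesis
    proof (cases "u \<noteq> b \<and> u \<notin> ?R v")
      case True
      have pu: "par u \<in> M" using T less.prems by (auto simp: is_rooted_tree_def)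
      have "card (?R (par u)) + card (?R v) < card (?R u) + card (?R v)"
        using card_step[OF T fin less.prems(1)] True by simp
      then have "d (par u) v powr q \<le> Dsum q M b par d (par u) v" using less.hyps pu less.prems by blast
      then show ?thesis using peel[OF T fin rm less.prems(1)] True less.prems by blast
    next
      case False
      have vb: "v \<noteq> b \<and> v \<notin> ?R u"
      proof (cases "u = b")
        case True then show ?thesis using ne R_b[OF T] by auto
      next
        case False
        then have "u \<in> ?R v" using \<open>\<not> (u \<noteq> b \<and> u \<notin> ?R v)\<close> by blast
        then show ?thesis using R_b[OF T] R_anti[OF T] ne by fastforce
      qed
      have pv: "par v \<in> M" using T less.prems by (auto simp: is_rooted_tree_def)
      have "card (?R (par v)) + card (?R u) < card (?R u) + card (?R v)"
        using card_step[OF T fin less.prems(2)] vb by simp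
      then have "d (par v) u powr q \<le> Dsum q M b par d (par v) u" using less.hyps pv less.prems by blast
      then have "d v u powr q \<le> Dsum q M b par d v u" using peel[OF T fin rm less.prems(2)] vb less.prems by blast
      moreover have "d v u = d u v" using rm less.prems unfolding rmetric_on_def by blast
      ultimately show ?thesis using Dsum_sym by metis
    qed
  qed
qed

lemma d_le_dT:
  assumes T: "is_rooted_tree M b par" and fin: "finite M" and rm: "rmetric_on q M d" and q: "0 < q"
    and u: "u \<in> M" and v: "v \<in> M"
  shows "d u v \<le> dT q M b par d u v"
proof -
  have d0: "0 \<le> d u v" using rm u v unfolding rmetric_on_def by blast
  have "d u v = (d u v powr q) powr (1 / q)" using d0 q by (simp add: powr_powr)
  also have "\<dots> \<le> Dsum q M b par d u v powr (1 / q)"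
    by (rule powr_mono2) (use q dist_le_Dsum[OF T fin rm u v] in auto)
  finally show ?thesis by (simp add: dT_Dsum)
qed

lemma dT_edge:
  assumes T: "is_rooted_tree M b par" and rm: "rmetric_on q M d" and q: "0 < q"
    and x: "x \<in> M" "x \<noteq> b"
  shows "dT q M b par d (par x) x = d (par x) x"
proof -
  let ?R = "root_edges M b par"
  have px: "par x \<in> M" using T x by (auto simp: is_rooted_tree_def)
  have s1: "?R x = insert x (?R (par x))" and s2: "x \<notin> ?R (par x)" using R_step[OF T x] by auto
  have D: "(?R (par x) - ?R x) \<union> (?R x - ?R (par x)) = {x}" using s1 s2 by auto
  have d0: "0 \<le> d (par x) x" using rm x px unfolding rmetric_on_def by blast
  show ?thesis unfolding dT_def D using d0 q by (simp add: powr_powr)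
qed

lemma tele:
  fixes f :: "'a \<Rightarrow> 'c \<Rightarrow> real"
  assumes T: "is_rooted_tree M b par" and fin: "finite M" and fb: "\<forall>t. f b t = 0"
  shows "y \<in> M \<Longrightarrow> f y t = (\<Sum>x\<in>root_edges M b par y. f x t - f (par x) t)"
proof (induction "card (root_edges M b par y)" arbitrary: y rule: less_induct)
  case less
  show ?case
  proof (cases "y = b")
    case True then show ?thesis using R_b[OF T] fb by simp
  next
    case False
    have py: "par y \<in> M" using T less.prems by (auto simp: is_rooted_tree_def)
    have s1: "root_edges M b par y = insert y (root_edges M b par (par y))"
      and s2: "y \<notin> root_edges M b par (par y)" using R_step[OF T less.prems False] by auto
    have IH: "f (par y) t = (\<Sum>x\<in>root_edges M b par (par y). f x t - f (par x) t)"
      using less.hyps[OF card_step[OF T fin less.prems False] py] .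
    have "(\<Sum>x\<in>root_edges M b par y. f x t - f (par x) t)
       = (f y t - f (par y) t) + (\<Sum>x\<in>root_edges M b par (par y). f x t - f (par x) t)"
      unfolding s1 by (rule sum.insert[OF R_fin[OF fin] s2])
    then show ?thesis using IH by simp
  qed
qed


definition Fset :: "real \<Rightarrow> ('a \<Rightarrow> 'a \<Rightarrow> real) \<Rightarrow> 'a \<Rightarrow> 'a set \<Rightarrow> 'a set \<Rightarrow> ('a \<Rightarrow> real) \<Rightarrow> real set" where
  "Fset p d b S A a = {N (\<lambda>t. \<Sum>x\<in>A. a x * f x t) | N f.
      pseminorm p (N :: ('a \<Rightarrow> real) \<Rightarrow> real) \<and> (\<forall>t. f b t = 0) \<and>
      (\<forall>x\<in>S. \<forall>y\<in>S. N (\<lambda>t. f x t - f y t) \<le> d x y)}"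

lemma Fnorm_Fset: "Fnorm p d b S A a = Sup (Fset p d b S A a)"
  unfolding Fnorm_def Fset_def by (rule refl)

lemma ps_zero: "pseminorm p Nn \<Longrightarrow> Nn (\<lambda>t. 0) = 0"
proof -
  assume ps: "pseminorm p Nn"
  have h: "\<forall>c x. Nn (\<lambda>t. c * x t) = \<bar>c\<bar> * Nn x" using ps unfolding pseminorm_def by blast
  show ?thesis using h[rule_format, of 0 "\<lambda>_. 0"] by simp
qed

lemma ps_scal: "pseminorm p Nn \<Longrightarrow> Nn (\<lambda>t. c * g t) = \<bar>c\<bar> * Nn g"
  unfolding pseminorm_def by blast

lemma ps_nonneg: "pseminorm p Nn \<Longrightarrow> 0 \<le> Nn g"
  unfolding pseminorm_def by blast

lemma ps_sum:
  fixes Nn :: "('a \<Rightarrow> real) \<Rightarrow> real" and h :: "'b \<Rightarrow> 'a \<Rightarrow> real"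
  assumes ps: "pseminorm p Nn" and p: "0 < p" and fin: "finite S"
  shows "Nn (\<lambda>t. \<Sum>x\<in>S. h x t) powr p \<le> (\<Sum>x\<in>S. Nn (h x) powr p)"
  using fin
proof (induction S rule: finite_induct)
  case empty
  then show ?case using ps_zero[OF ps] by simp
next
  case (insert x F)
  have "Nn (\<lambda>t. \<Sum>y\<in>insert x F. h y t) = Nn (\<lambda>t. h x t + (\<lambda>t. \<Sum>y\<in>F. h y t) t)"
    using insert by simp
  also have "\<dots> powr p \<le> Nn (h x) powr p + Nn (\<lambda>t. \<Sum>y\<in>F. h y t) powr p"
    using ps unfolding pseminorm_def by (metis eta_contract_eq)
  finally show ?case using insert by simp
qed

lemma root_le:
  fixes z C p :: real
  assumes "0 \<le> z" "0 < p" "z powr p \<le> C"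
  shows "z \<le> C powr (1 / p)"
proof -
  have "z = (z powr p) powr (1 / p)" using assms by (simp add: powr_powr)
  also have "\<dots> \<le> C powr (1 / p)" by (rule powr_mono2) (use assms in auto)
  finally show ?thesis .
qed

lemma Fset_bound:
  assumes p: "0 < p" and bS: "b \<in> S" and AS: "A \<subseteq> S" and fin: "finite A"
    and z: "z \<in> Fset p \<rho> b S A a"
  shows "z \<le> (\<Sum>y\<in>A. (\<bar>a y\<bar> * \<rho> y b) powr p) powr (1 / p)"
proof -
  obtain Nn :: "('a \<Rightarrow> real) \<Rightarrow> real" and f where zd: "z = Nn (\<lambda>t. \<Sum>x\<in>A. a x * f x t)" and ps: "pseminorm p Nn"
    and fb: "\<forall>t. f b t = 0" and lip: "\<forall>x\<in>S. \<forall>y\<in>S. Nn (\<lambda>t. f x t - f y t) \<le> \<rho> x y"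
    using z unfolding Fset_def by blast
  have "z powr p \<le> (\<Sum>x\<in>A. Nn (\<lambda>t. a x * f x t) powr p)"
    unfolding zd by (rule ps_sum[OF ps p fin])
  also have "\<dots> \<le> (\<Sum>y\<in>A. (\<bar>a y\<bar> * \<rho> y b) powr p)"
  proof (rule sum_mono)
    fix y assume y: "y \<in> A"
    have e: "(\<lambda>t. f y t - f b t) = f y" using fb by auto
    have yS: "y \<in> S" using y AS by blast
    have "Nn (\<lambda>t. f y t - f b t) \<le> \<rho> y b" using lip yS bS by blast
    then have "Nn (f y) \<le> \<rho> y b" using e by simp
    then have "\<bar>a y\<bar> * Nn (f y) \<le> \<bar>a y\<bar> * \<rho> y b" by (simp add: mult_left_mono)
    then show "Nn (\<lambda>t. a y * f y t) powr p \<le> (\<bar>a y\<bar> * \<rho> y b) powr p"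
    proof -
      assume le: "\<bar>a y\<bar> * Nn (f y) \<le> \<bar>a y\<bar> * \<rho> y b"
      have eq: "Nn (\<lambda>t. a y * f y t) = \<bar>a y\<bar> * Nn (f y)" by (rule ps_scal[OF ps])
      have nn: "0 \<le> \<bar>a y\<bar> * Nn (f y)" using ps_nonneg[OF ps] by simp
      show ?thesis unfolding eq using powr_mono2[of p, OF _ nn le] p by simp
    qed
  qed
  finally show ?thesis using root_le p zd ps_nonneg[OF ps] by blast
qed

lemma Fset_bdd:
  assumes p: "0 < p" and bS: "b \<in> S" and AS: "A \<subseteq> S" and fin: "finite A"
  shows "bdd_above (Fset p \<rho> b S A a)"
  by (rule bdd_aboveI) (rule Fset_bound[OF assms])

lemma Fset_ne:
  assumes "\<forall>x\<in>S. \<forall>y\<in>S. 0 \<le> \<rho> x y"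
  shows "Fset p \<rho> b S A a \<noteq> {}"
proof -
  have "0 \<in> Fset p \<rho> b S A a" unfolding Fset_def
    apply (rule CollectI)
    apply (rule exI[where x="\<lambda>_::'a\<Rightarrow>real. 0::real"])
    apply (rule exI[where x="\<lambda>(_::'a) (_::'a). 0::real"])
    using assms by (simp add: pseminorm_def)
  then show ?thesis by blast
qed

lemma Fnorm_mono:
  assumes p: "0 < p" and bS: "b \<in> S" and AS: "A \<subseteq> S" and fin: "finite A"
    and le: "\<forall>x\<in>S. \<forall>y\<in>S. 0 \<le> \<rho>1 x y \<and> \<rho>1 x y \<le> \<rho>2 x y"
  shows "Fnorm p \<rho>1 b S A a \<le> Fnorm p \<rho>2 b S A a"
  unfolding Fnorm_Fset
proof (rule cSup_subset_mono)
  show "Fset p \<rho>1 b S A a \<noteq> {}" using le by (intro Fset_ne) blast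
  show "bdd_above (Fset p \<rho>2 b S A a)" by (rule Fset_bdd[OF p bS AS fin])
  show "Fset p \<rho>1 b S A a \<subseteq> Fset p \<rho>2 b S A a"
    unfolding Fset_def using le by (smt (verit) Collect_mono)
qed


lemma tree_bound:
  assumes T: "is_rooted_tree M b par" and fin: "finite M" and rm: "rmetric_on q M d"
    and q: "0 < q" and p: "0 < p" and NM: "N \<subseteq> M"
    and a0: "\<forall>x. x \<notin> N - {b} \<longrightarrow> a x = 0"
    and z: "z \<in> Fset p (dT q M b par d) b M (N - {b}) a"
  shows "z \<le> Ttree p M b par d a"
proof -
  obtain Nn :: "('a \<Rightarrow> real) \<Rightarrow> real" and f where zd: "z = Nn (\<lambda>t. \<Sum>x\<in>N - {b}. a x * f x t)"
    and ps: "pseminorm p Nn"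
    and fb: "\<forall>t. f b t = 0" and lip: "\<forall>x\<in>M. \<forall>y\<in>M. Nn (\<lambda>t. f x t - f y t) \<le> dT q M b par d x y"
    using z unfolding Fset_def by blast
  define g where "g = (\<lambda>x t. f x t - f (par x) t)"
  define A where "A = (\<lambda>x. \<Sum>y\<in>subtree M par x. a y)"
  have key: "(\<lambda>t. \<Sum>x\<in>N - {b}. a x * f x t) = (\<lambda>t. \<Sum>x\<in>M - {b}. A x * g x t)"
  proof (rule ext)
    fix t
    have "(\<Sum>x\<in>N - {b}. a x * f x t) = (\<Sum>y\<in>M. a y * f y t)"
      by (rule sum.mono_neutral_left) (use fin NM a0 in auto)
    also have "\<dots> = (\<Sum>y\<in>M. \<Sum>x\<in>root_edges M b par y. a y * g x t)"
    proof (rule sum.cong)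
      fix y assume "y \<in> M"
      then show "a y * f y t = (\<Sum>x\<in>root_edges M b par y. a y * g x t)"
        using tele[of M b par f, OF T fin fb, of y t] by (simp add: sum_distrib_left g_def)
    qed simp
    also have "\<dots> = (\<Sum>y\<in>M. \<Sum>x\<in>{x. x \<in> M - {b} \<and> y \<in> subtree M par x}. a y * g x t)"
      by (simp add: root_edges_def)
    also have "\<dots> = (\<Sum>x\<in>M - {b}. \<Sum>y\<in>{y. y \<in> M \<and> y \<in> subtree M par x}. a y * g x t)"
      by (rule sum.swap_restrict) (use fin in auto)
    also have "\<dots> = (\<Sum>x\<in>M - {b}. A x * g x t)"
    proof (rule sum.cong)
      fix x assume "x \<in> M - {b}"
      have "{y. y \<in> M \<and> y \<in> subtree M par x} = subtree M par x" by (auto simp: subtree_def)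
      then show "(\<Sum>y\<in>{y. y \<in> M \<and> y \<in> subtree M par x}. a y * g x t) = A x * g x t"
        by (simp add: A_def sum_distrib_right)
    qed simp
    finally show "(\<Sum>x\<in>N - {b}. a x * f x t) = (\<Sum>x\<in>M - {b}. A x * g x t)" .
  qed
  have "z powr p \<le> (\<Sum>x\<in>M - {b}. Nn (\<lambda>t. A x * g x t) powr p)"
    unfolding zd key by (rule ps_sum[OF ps p]) (use fin in simp)
  also have "\<dots> \<le> (\<Sum>x\<in>M - {b}. \<bar>A x * d (par x) x\<bar> powr p)"
  proof (rule sum_mono)
    fix x assume x: "x \<in> M - {b}"
    have px: "par x \<in> M" using T x by (auto simp: is_rooted_tree_def)
    have d0: "0 \<le> d (par x) x" using rm x px unfolding rmetric_on_def by blast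
    have "Nn (g x) \<le> dT q M b par d x (par x)" using lip x px unfolding g_def by blast
    also have "\<dots> = dT q M b par d (par x) x" by (rule dT_sym)
    also have "\<dots> = d (par x) x" using x by (intro dT_edge[OF T rm q]) auto
    finally have "\<bar>A x\<bar> * Nn (g x) \<le> \<bar>A x\<bar> * d (par x) x" by (simp add: mult_left_mono)
    then have le: "\<bar>A x\<bar> * Nn (g x) \<le> \<bar>A x * d (par x) x\<bar>" using d0 by (simp add: abs_mult)
    have eq: "Nn (\<lambda>t. A x * g x t) = \<bar>A x\<bar> * Nn (g x)" by (rule ps_scal[OF ps])
    have nn: "0 \<le> \<bar>A x\<bar> * Nn (g x)" using ps_nonneg[OF ps] by simp
    show "Nn (\<lambda>t. A x * g x t) powr p \<le> \<bar>A x * d (par x) x\<bar> powr p"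
      unfolding eq using powr_mono2[of p, OF _ nn le] p by simp
  qed
  finally have "z \<le> (\<Sum>x\<in>M - {b}. \<bar>A x * d (par x) x\<bar> powr p) powr (1 / p)"
    using root_le p zd ps_nonneg[OF ps] by blast
  then show ?thesis by (simp add: Ttree_def A_def)
qed

theorem lemma3p12:
  fixes p q :: real and M N :: "'a set" and b :: 'a and d :: "'a \<Rightarrow> 'a \<Rightarrow> real"
    and a :: "'a \<Rightarrow> real" and par :: "'a \<Rightarrow> 'a"
  assumes "0 < p" "p \<le> q" "q \<le> 1"
    and "finite M" "rmetric_on q M d"
    and "b \<in> N" "N \<subseteq> M"
    and "\<forall>x. x \<notin> N - {b} \<longrightarrow> a x = 0"
    and "is_rooted_tree M b par"
  shows "Ttree p M b par (dT q M b par d) a = Ttree p M b par d a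
    \<and> Fnorm p (dT q M b par d) b N (N - {b}) a \<ge> Fnorm p d b N (N - {b}) a
    \<and> ((Ttree p M b par d a = 1 \<and> Fnorm p d b M (N - {b}) a = 1
         \<and> amen p d b N M = ereal (Fnorm p d b N (N - {b}) a))
       \<longrightarrow> amen p d b N M
             \<le> ereal (Fnorm p (dT q M b par d) b N (N - {b}) a / Ttree p M b par (dT q M b par d) a)
         \<and> ereal (Fnorm p (dT q M b par d) b N (N - {b}) a / Ttree p M b par (dT q M b par d) a)
             \<le> amen p (dT q M b par d) b N M)"
proof -
  note p = assms(1) and fin = assms(4) and rm = assms(5) and bN = assms(6) and NM = assms(7)
    and a0 = assms(8) and T = assms(9)
  have q: "0 < q" using assms(1,2) by linarith
  have finN: "finite (N - {b})" using fin NM by (meson finite_Diff finite_subset)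
  have c1: "Ttree p M b par (dT q M b par d) a = Ttree p M b par d a"
    unfolding Ttree_def using dT_edge[OF T rm q] by (intro arg_cong2[where f="(powr)"] sum.cong) auto
  have c2: "Fnorm p d b N (N - {b}) a \<le> Fnorm p (dT q M b par d) b N (N - {b}) a"
  proof (rule Fnorm_mono[OF p bN _ finN])
    show "N - {b} \<subseteq> N" by blast
    show "\<forall>x\<in>N. \<forall>y\<in>N. 0 \<le> d x y \<and> d x y \<le> dT q M b par d x y"
    proof (intro ballI conjI)
      fix x y assume x: "x \<in> N" and y: "y \<in> N"
      then have xM: "x \<in> M" and yM: "y \<in> M" using NM by auto
      show "0 \<le> d x y" using rm xM yM unfolding rmetric_on_def by blast
      show "d x y \<le> dT q M b par d x y" by (rule d_le_dT[OF T fin rm q xM yM])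
    qed
  qed
  have c3: "Fnorm p (dT q M b par d) b M (N - {b}) a \<le> Ttree p M b par d a"
    unfolding Fnorm_Fset
  proof (rule cSup_least)
    show "Fset p (dT q M b par d) b M (N - {b}) a \<noteq> {}"
      by (rule Fset_ne) (simp add: dT_def)
    fix z assume "z \<in> Fset p (dT q M b par d) b M (N - {b}) a"
    then show "z \<le> Ttree p M b par d a" by (rule tree_bound[OF T fin rm q p NM a0])
  qed
  show ?thesis
  proof (intro conjI impI)
    show "Ttree p M b par (dT q M b par d) a = Ttree p M b par d a" by (rule c1)
    show "Fnorm p d b N (N - {b}) a \<le> Fnorm p (dT q M b par d) b N (N - {b}) a" by (rule c2)
  next
    assume H: "Ttree p M b par d a = 1 \<and> Fnorm p d b M (N - {b}) a = 1
         \<and> amen p d b N M = ereal (Fnorm p d b N (N - {b}) a)"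
    have T1: "Ttree p M b par (dT q M b par d) a = 1" using H c1 by simp
    show "amen p d b N M
             \<le> ereal (Fnorm p (dT q M b par d) b N (N - {b}) a / Ttree p M b par (dT q M b par d) a)"
      using H c2 T1 by simp
    have "Fnorm p (dT q M b par d) b M (N - {b}) a \<le> 1" using c3 H by simp
    then have "ereal (Fnorm p (dT q M b par d) b N (N - {b}) a) \<le> amen p (dT q M b par d) b N M"
      unfolding amen_def by (intro Sup_upper) blast
    then show "ereal (Fnorm p (dT q M b par d) b N (N - {b}) a / Ttree p M b par (dT q M b par d) a)
             \<le> amen p (dT q M b par d) b N M" using T1 by simp
  qed
qed

end
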